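(* Let $D\subset\mathbb{R}^d$ be measurable, $k$ a measurable positive definite kernel on $D$ with all integrals below finite, and $r:D\to[0,\infty)$. Let $\bar{\mathbf{x}}_1,\dots,\bar{\mathbf{x}}_n\in D$ be distinct with replicate counts $a_1,\dots,a_n\ge1$, $N=\sum_ia_i$, with $r(\bar{\mathbf{x}}_i)>0$ for all $i$. Let $\mathbf{K}_n$ be the matrix with entries $k(\bar{\mathbf{x}}_i,\bar{\mathbf{x}}_j)+\delta_{ij}r(\bar{\mathbf{x}}_i)/a_i$ (invertible), $\mathbf{k}(\mathbf{x})=(k(\mathbf{x},\bar{\mathbf{x}}_i))_{i=1}^n$, $w(\mathbf{y},\mathbf{z})=\int_Dk(\mathbf{y},\mathbf{x})k(\mathbf{z},\mathbf{x})\,d\mathbf{x}$, $\mathbf{W}_n=(w(\bar{\mathbf{x}}_i,\bar{\mathbf{x}}_j))_{i,j}$, $\mathbf{w}(\tilde{\mathbf{x}})=(w(\tilde{\mathbf{x}},\bar{\mathbf{x}}_i))_{i=1}^n$, $E=\int_Dk(\mathbf{x},\mathbf{x})\,d\mathbf{x}$, $\check{\sigma}_n^2(\mathbf{x})=k(\mathbf{x},\mathbf{x})-\mathbf{k}(\mathbf{x})^\top\mathbf{K}_n^{-1}\mathbf{k}(\mathbf{x})$, $\sigma_n^2(\mathbf{x})=\check{\sigma}_n^2(\mathbf{x})+r(\mathbf{x})$, and assume $\sigma_n^2(\tilde{\mathbf{x}})>0$ for all $\tilde{\mathbf{x}}\in D$. Define: - for $k\in\{1,\dots,n\}$, $I_{N+1}(\bar{\mathbf{x}}_k)=E-\mathrm{tr}(\mathbf{K}'^{-1}\mathbf{W}_n)$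 where $\mathbf{K}'$ is $\mathbf{K}_n$ with $a_k$ replaced by $a_k+1$ (adding a replicate at $\bar{\mathbf{x}}_k$); - for $\tilde{\mathbf{x}}\in D$, $I_{N+1}(\tilde{\mathbf{x}})=E-\mathrm{tr}(\mathbf{K}_{n+1}^{-1}\mathbf{W}_{n+1})$ where $\mathbf{K}_{n+1}=\begin{bmatrix}\mathbf{K}_n&\mathbf{k}(\tilde{\mathbf{x}})\\\mathbf{k}(\tilde{\mathbf{x}})^\top&k(\tilde{\mathbf{x}},\tilde{\mathbf{x}})+r(\tilde{\mathbf{x}})\end{bmatrix}$ and $\mathbf{W}_{n+1}=\begin{bmatrix}\mathbf{W}_n&\mathbf{w}(\tilde{\mathbf{x}})\\\mathbf{w}(\tilde{\mathbf{x}})^\top&w(\tilde{\mathbf{x}},\tilde{\mathbf{x}})\end{bmatrix}$ (adding $\tilde{\mathbf{x}}$ as a new design site with a single observation). Let $k^*\in\arg\min_{1\le k\le n}I_{N+1}(\bar{\mathbf{x}}_k)$ and $$\mathbf{B}_{k^*}=\frac{(\mathbf{K}_n^{-1})_{\cdot,k^*}(\mathbf{K}_n^{-1})_{k^*,\cdot}}{a_{k^*}(a_{k^*}+1)/r(\bar{\mathbf{x}}_{k^*})-(\mathbf{K}_n^{-1})_{k^*,k^*}},$$ and suppose $\mathrm{tr}(\mathbf{B}_{k^*}\mathbf{W}_n)>0$ (and the denominator of $\mathbf{B}_{k^*}$ is nonzero). If $$r(\tilde{\mathbf{x}})\ \ge\ \frac{\mathbf{k}(\tilde{\mathbf{x}})^\top\mathbf{K}_n^{-1}\mathbf{W}_n\mathbf{K}_n^{-1}\mathbf{k}(\tilde{\mathbf{x}})-2\mathbf{w}(\tilde{\mathbf{x}})^\top\mathbf{K}_n^{-1}\mathbf{k}(\tilde{\mathbf{x}})+w(\tilde{\mathbf{x}},\tilde{\mathbf{x}})}{\mathrm{tr}(\mathbf{B}_{k^*}\mathbf{W}_n)}-\check{\sigma}_n^2(\tilde{\mathbf{x}})\qquad\text{for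 all }\tilde{\mathbf{x}}\in D,$$ then replicating is optimal, i.e. $I_{N+1}(\bar{\mathbf{x}}_{k^*})\le I_{N+1}(\tilde{\mathbf{x}})$ for all $\tilde{\mathbf{x}}\in D$.
   Context: Setting: sequential design for Gaussian process regression with zero-mean GP prior with kernel $k$, independent Gaussian noise of variance $r(\mathbf{x})$, and $a_i$ replicates at unique site $\bar{\mathbf{x}}_i$. The criterion is the integrated mean-squared prediction error (integral over $D$ of the de-noised posterior variance $\check{\sigma}^2$) of the design after one more observation, either a replicate at an existing site or a new site. $\delta_{ij}$ is the Kronecker delta; $(\cdot)_{\cdot,k}$ and $(\cdot)_{k,\cdot}$ denote the $k$-th column and row. *)

theory Defs
  imports "HOL-Analysis.Analysis" "Jordan_Normal_Form.Matrix"
begin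

(* Positive (semi)definite kernel on D: symmetric, and every Gram matrix of points of D
   is positive semidefinite (the usual meaning of "positive definite kernel"). *)
definition pd_kernel :: "'a set \<Rightarrow> ('a \<Rightarrow> 'a \<Rightarrow> real) \<Rightarrow> bool" where
  "pd_kernel D k \<longleftrightarrow> (\<forall>x\<in>D. \<forall>y\<in>D. k x y = k y x) \<and>
     (\<forall>(m::nat) (xs::nat \<Rightarrow> 'a) (c::nat \<Rightarrow> real). (\<forall>i<m. xs i \<in> D) \<longrightarrow>
        0 \<le> (\<Sum>i<m. \<Sum>j<m. c i * c j * k (xs i) (xs j)))"

definition mtrace :: "real mat \<Rightarrow> real" where
  "mtrace M = (\<Sum>i<dim_row M. M $$ (i, i))"

definition minv :: "real mat \<Rightarrow> real mat" where
  "minv A = (SOME B. B \<in> carrier_mat (dim_row A) (dim_row A) \<and>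
                     A * B = 1\<^sub>m (dim_row A) \<and> B * A = 1\<^sub>m (dim_row A))"

definition Kmat :: "('a \<Rightarrow> 'a \<Rightarrow> real) \<Rightarrow> ('a \<Rightarrow> real) \<Rightarrow> nat \<Rightarrow> (nat \<Rightarrow> 'a) \<Rightarrow> (nat \<Rightarrow> nat) \<Rightarrow> real mat" where
  "Kmat k r n xb a = mat n n (\<lambda>(i, j). k (xb i) (xb j) + (if i = j then r (xb i) / real (a i) else 0))"

definition kvec :: "('a \<Rightarrow> 'a \<Rightarrow> real) \<Rightarrow> nat \<Rightarrow> (nat \<Rightarrow> 'a) \<Rightarrow> 'a \<Rightarrow> real vec" where
  "kvec k n xb x = vec n (\<lambda>i. k x (xb i))"

definition wfun :: "('a::euclidean_space) set \<Rightarrow> ('a \<Rightarrow> 'a \<Rightarrow> real) \<Rightarrow> 'a \<Rightarrow> 'a \<Rightarrow> real" where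
  "wfun D k y z = (LINT x:D|lebesgue. k y x * k z x)"

definition Wmat :: "('a::euclidean_space) set \<Rightarrow> ('a \<Rightarrow> 'a \<Rightarrow> real) \<Rightarrow> nat \<Rightarrow> (nat \<Rightarrow> 'a) \<Rightarrow> real mat" where
  "Wmat D k n xb = mat n n (\<lambda>(i, j). wfun D k (xb i) (xb j))"

definition wvec :: "('a::euclidean_space) set \<Rightarrow> ('a \<Rightarrow> 'a \<Rightarrow> real) \<Rightarrow> nat \<Rightarrow> (nat \<Rightarrow> 'a) \<Rightarrow> 'a \<Rightarrow> real vec" where
  "wvec D k n xb x = vec n (\<lambda>i. wfun D k x (xb i))"

definition Eint :: "('a::euclidean_space) set \<Rightarrow> ('a \<Rightarrow> 'a \<Rightarrow> real) \<Rightarrow> real" where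
  "Eint D k = (LINT x:D|lebesgue. k x x)"

definition sigma_check :: "('a \<Rightarrow> 'a \<Rightarrow> real) \<Rightarrow> ('a \<Rightarrow> real) \<Rightarrow> nat \<Rightarrow> (nat \<Rightarrow> 'a) \<Rightarrow> (nat \<Rightarrow> nat) \<Rightarrow> 'a \<Rightarrow> real" where
  "sigma_check k r n xb a x = k x x - kvec k n xb x \<bullet> (minv (Kmat k r n xb a) *\<^sub>v kvec k n xb x)"

definition I_rep :: "('a::euclidean_space) set \<Rightarrow> ('a \<Rightarrow> 'a \<Rightarrow> real) \<Rightarrow> ('a \<Rightarrow> real) \<Rightarrow> nat \<Rightarrow> (nat \<Rightarrow> 'a) \<Rightarrow> (nat \<Rightarrow> nat) \<Rightarrow> nat \<Rightarrow> real" where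
  "I_rep D k r n xb a j = Eint D k - mtrace (minv (Kmat k r n xb (a(j := a j + 1))) * Wmat D k n xb)"

definition K_new :: "('a \<Rightarrow> 'a \<Rightarrow> real) \<Rightarrow> ('a \<Rightarrow> real) \<Rightarrow> nat \<Rightarrow> (nat \<Rightarrow> 'a) \<Rightarrow> (nat \<Rightarrow> nat) \<Rightarrow> 'a \<Rightarrow> real mat" where
  "K_new k r n xb a x = four_block_mat (Kmat k r n xb a) (mat_of_cols n [kvec k n xb x])
      (mat_of_rows n [kvec k n xb x]) (mat 1 1 (\<lambda>_. k x x + r x))"

definition W_new :: "('a::euclidean_space) set \<Rightarrow> ('a \<Rightarrow> 'a \<Rightarrow> real) \<Rightarrow> nat \<Rightarrow> (nat \<Rightarrow> 'a) \<Rightarrow> 'a \<Rightarrow> real mat" where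
  "W_new D k n xb x = four_block_mat (Wmat D k n xb) (mat_of_cols n [wvec D k n xb x])
      (mat_of_rows n [wvec D k n xb x]) (mat 1 1 (\<lambda>_. wfun D k x x))"

definition I_new :: "('a::euclidean_space) set \<Rightarrow> ('a \<Rightarrow> 'a \<Rightarrow> real) \<Rightarrow> ('a \<Rightarrow> real) \<Rightarrow> nat \<Rightarrow> (nat \<Rightarrow> 'a) \<Rightarrow> (nat \<Rightarrow> nat) \<Rightarrow> 'a \<Rightarrow> real" where
  "I_new D k r n xb a x = Eint D k - mtrace (minv (K_new k r n xb a x) * W_new D k n xb x)"

definition B_den :: "('a \<Rightarrow> 'a \<Rightarrow> real) \<Rightarrow> ('a \<Rightarrow> real) \<Rightarrow> nat \<Rightarrow> (nat \<Rightarrow> 'a) \<Rightarrow> (nat \<Rightarrow> nat) \<Rightarrow> nat \<Rightarrow> real" where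
  "B_den k r n xb a j = real (a j) * real (a j + 1) / r (xb j) - minv (Kmat k r n xb a) $$ (j, j)"

definition Bmat :: "('a \<Rightarrow> 'a \<Rightarrow> real) \<Rightarrow> ('a \<Rightarrow> real) \<Rightarrow> nat \<Rightarrow> (nat \<Rightarrow> 'a) \<Rightarrow> (nat \<Rightarrow> nat) \<Rightarrow> nat \<Rightarrow> real mat" where
  "Bmat k r n xb a j = (1 / B_den k r n xb a j) \<cdot>\<^sub>m
     mat n n (\<lambda>(i, l). minv (Kmat k r n xb a) $$ (i, j) * minv (Kmat k r n xb a) $$ (j, l))"

end

theory Submission
  imports Defs "Jordan_Normal_Form.Determinant"
begin


lemma mult_entry:
  assumes "A \<in> carrier_mat nr m" "B \<in> carrier_mat m nc" "i < nr" "j < nc"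
  shows "(A * B) $$ (i, j) = (\<Sum>l<m. A $$ (i, l) * B $$ (l, j))"
  using assms by (auto simp: scalar_prod_def lessThan_atLeast0 intro!: sum.cong)

lemma mtrace_mult:
  assumes "A \<in> carrier_mat n m" "B \<in> carrier_mat m n"
  shows "mtrace (A * B) = (\<Sum>i<n. \<Sum>l<m. A $$ (i, l) * B $$ (l, i))"
  using assms unfolding mtrace_def
  by (auto intro!: sum.cong simp del: index_mult_mat(1) simp add: mult_entry[OF assms])

lemma minv_eq:
  assumes A: "A \<in> carrier_mat n n" and B: "B \<in> carrier_mat n n" and AB: "A * B = 1\<^sub>m n"
  shows "minv A = B"
proof -
  have BA: "B * A = 1\<^sub>m n" using mat_mult_left_right_inverse[OF A B AB] .
  have ex: "\<exists>C. C \<in> carrier_mat (dim_row A) (dim_row A) \<and> A * C = 1\<^sub>m (dim_row A) \<and> C * A = 1\<^sub>m (dim_row A)"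
    using A B AB BA by auto
  obtain C where C: "C \<in> carrier_mat n n" "A * C = 1\<^sub>m n" "C * A = 1\<^sub>m n" and Cd: "minv A = C"
    using someI_ex[OF ex] A unfolding minv_def by auto
  have 1: "C * (A * B) = C" using C(1) by (simp add: AB)
  have 2: "C * (A * B) = (C * A) * B" using assoc_mult_mat[OF C(1) A B] by simp
  have 3: "(C * A) * B = B" using C B by simp
  show ?thesis using 1 2 3 Cd by simp
qed

lemma inv_entry:
  fixes K Ki :: "real mat"
  assumes "K \<in> carrier_mat n n" "Ki \<in> carrier_mat n n" "K * Ki = 1\<^sub>m n" "i < n" "j < n"
  shows "(\<Sum>l<n. K $$ (i, l) * Ki $$ (l, j)) = (if i = j then 1 else 0)"
proof -
  have "(K * Ki) $$ (i, j) = (if i = j then 1 else 0)" using assms by simp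
  thus ?thesis using mult_entry[OF assms(1,2,4,5)] by simp
qed


lemma rep_inverse:
  fixes K Ki :: "real mat" and t c :: real
  assumes K: "K \<in> carrier_mat n n" and Ki: "Ki \<in> carrier_mat n n" and KKi: "K * Ki = 1\<^sub>m n"
    and pn: "p < n"
    and ct: "t - c - c * t * Ki $$ (p, p) = 0"
  shows "mat n n (\<lambda>(i, j). K $$ (i, j) - (if i = p \<and> j = p then c else 0)) *
         mat n n (\<lambda>(i, j). Ki $$ (i, j) + t * (Ki $$ (i, p) * Ki $$ (p, j))) = 1\<^sub>m n"
    (is "?K' * ?M = _")
proof (rule eq_matI)
  fix i j assume i: "i < dim_row (1\<^sub>m n :: real mat)" and j: "j < dim_col (1\<^sub>m n :: real mat)"
  hence i: "i < n" and j: "j < n" by auto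
  define X where "X l = Ki $$ (l, j) + t * (Ki $$ (l, p) * Ki $$ (p, j))" for l
  have "(?K' * ?M) $$ (i, j) = (\<Sum>l<n. (K $$ (i, l) - (if i = p \<and> l = p then c else 0)) * X l)"
    using i j by (subst mult_entry[of _ n n]) (auto intro!: sum.cong simp: X_def)
  also have "\<dots> = (\<Sum>l<n. K $$ (i, l) * Ki $$ (l, j) + t * Ki $$ (p, j) * (K $$ (i, l) * Ki $$ (l, p))
      - (if i = p \<and> l = p then c else 0) * X l)"
    by (rule sum.cong) (auto simp: X_def algebra_simps)
  also have "\<dots> = (\<Sum>l<n. K $$ (i, l) * Ki $$ (l, j)) + t * Ki $$ (p, j) * (\<Sum>l<n. K $$ (i, l) * Ki $$ (l, p))
      - (\<Sum>l<n. (if i = p \<and> l = p then c else 0) * X l)"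
    by (simp only: sum.distrib sum_subtractf sum_distrib_left)
  also have "(\<Sum>l<n. (if i = p \<and> l = p then c else 0) * X l) = (if i = p then c * X p else 0)"
  proof -
    have "(\<Sum>l<n. (if i = p \<and> l = p then c else 0) * X l) = (\<Sum>l<n. if l = p then (if i = p then c * X p else 0) else 0)"
      by (rule sum.cong) auto
    thus ?thesis using pn by simp
  qed
  also have "(\<Sum>l<n. K $$ (i, l) * Ki $$ (l, j)) = (if i = j then 1 else 0)"
    using inv_entry[OF K Ki KKi i j] .
  also have "(\<Sum>l<n. K $$ (i, l) * Ki $$ (l, p)) = (if i = p then 1 else 0)"
    using inv_entry[OF K Ki KKi i pn] .
  finally have eq: "(?K' * ?M) $$ (i, j) = (if i = j then 1 else 0) + t * Ki $$ (p, j) * (if i = p then 1 else 0)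
     - (if i = p then c * X p else 0)" .
  have h: "t * Ki $$ (p, j) - c * X p = Ki $$ (p, j) * (t - c - c * t * Ki $$ (p, p))"
    by (simp add: X_def algebra_simps)
  show "(?K' * ?M) $$ (i, j) = 1\<^sub>m n $$ (i, j)"
    unfolding eq using ct i j h by (cases "i = p") auto
qed auto

lemma Kv_entry:
  fixes K Ki :: "real mat" and kv :: "real vec"
  assumes K: "K \<in> carrier_mat n n" and Ki: "Ki \<in> carrier_mat n n" and KKi: "K * Ki = 1\<^sub>m n"
    and i: "i < n"
  shows "(\<Sum>l<n. K $$ (i, l) * (\<Sum>m<n. Ki $$ (l, m) * kv $ m)) = kv $ i"
proof -
  have "(\<Sum>l<n. K $$ (i, l) * (\<Sum>m<n. Ki $$ (l, m) * kv $ m))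
      = (\<Sum>m<n. (\<Sum>l<n. K $$ (i, l) * Ki $$ (l, m)) * kv $ m)"
  proof -
    have "(\<Sum>l<n. K $$ (i, l) * (\<Sum>m<n. Ki $$ (l, m) * kv $ m)) = (\<Sum>l<n. \<Sum>m<n. K $$ (i, l) * Ki $$ (l, m) * kv $ m)"
      by (simp add: sum_distrib_left mult.assoc)
    also have "\<dots> = (\<Sum>m<n. \<Sum>l<n. K $$ (i, l) * Ki $$ (l, m) * kv $ m)"
      by (rule sum.swap)
    also have "\<dots> = (\<Sum>m<n. (\<Sum>l<n. K $$ (i, l) * Ki $$ (l, m)) * kv $ m)"
      by (simp add: sum_distrib_right)
    finally show ?thesis .
  qed
  also have "\<dots> = (\<Sum>m<n. (if m = i then kv $ i else 0))"
    by (rule sum.cong) (auto simp: inv_entry[OF K Ki KKi i])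
  also have "\<dots> = kv $ i" using i by simp
  finally show ?thesis .
qed

lemma new_inverse:
  fixes K Ki :: "real mat" and kv :: "real vec" and d s :: real and v :: "nat \<Rightarrow> real"
  assumes K: "K \<in> carrier_mat n n" and Ki: "Ki \<in> carrier_mat n n" and KKi: "K * Ki = 1\<^sub>m n"
    and sym: "\<forall>i<n. \<forall>j<n. Ki $$ (i, j) = Ki $$ (j, i)"
    and kv: "kv \<in> carrier_vec n"
    and vdef: "v = (\<lambda>i. \<Sum>l<n. Ki $$ (i, l) * kv $ l)"
    and sdef: "s = d - (\<Sum>l<n. kv $ l * v l)" and s0: "s \<noteq> 0"
  shows "four_block_mat K (mat_of_cols n [kv]) (mat_of_rows n [kv]) (mat 1 1 (\<lambda>_. d)) *
     mat (Suc n) (Suc n) (\<lambda>(i, j). if i < n then if j < n then Ki $$ (i, j) + v i * v j / s else - v i / s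
        else if j < n then - v j / s else 1 / s) = 1\<^sub>m (Suc n)"
    (is "?K4 * ?M = _")
proof -
  define f where "f = (\<lambda>(i, j). if i < n then if j < n then K $$ (i, j) else kv $ i
        else if j < n then kv $ j else d)"
  define g where "g = (\<lambda>(i, j). if i < n then if j < n then Ki $$ (i, j) + v i * v j / s else - v i / s
        else if j < n then - v j / s else 1 / s)"
  have K4: "?K4 = mat (Suc n) (Suc n) f"
    using K kv by (intro eq_matI) (auto simp: f_def mat_of_cols_index mat_of_rows_index)
  have Kv: "(\<Sum>l<n. K $$ (i, l) * v l) = kv $ i" if "i < n" for i
    using Kv_entry[OF K Ki KKi that] vdef by simp
  have kvKi: "(\<Sum>l<n. kv $ l * Ki $$ (l, j)) = v j" if "j < n" for j
    unfolding vdef using sym that by (auto intro!: sum.cong simp: mult.commute)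
  have entry: "(?K4 * ?M) $$ (i, j) = (\<Sum>l<n. f (i, l) * g (l, j)) + f (i, n) * g (n, j)"
    if "i < Suc n" "j < Suc n" for i j
    unfolding K4 using that
    by (subst mult_entry[of _ "Suc n" "Suc n"]) (auto intro!: sum.cong simp: g_def)
  show ?thesis
  proof (rule eq_matI)
    fix i j assume "i < dim_row (1\<^sub>m (Suc n) :: real mat)" "j < dim_col (1\<^sub>m (Suc n) :: real mat)"
    hence i: "i < Suc n" and j: "j < Suc n" by auto
    show "(?K4 * ?M) $$ (i, j) = 1\<^sub>m (Suc n) $$ (i, j)"
    proof (cases "i < n")
      case True
      note ii = True
      show ?thesis
      proof (cases "j < n")
        case True
        have "(\<Sum>l<n. f (i, l) * g (l, j)) = (\<Sum>l<n. K $$ (i, l) * Ki $$ (l, j) + K $$ (i, l) * v l * (v j / s))"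
          using ii True by (auto intro!: sum.cong simp: f_def g_def algebra_simps)
        also have "\<dots> = (\<Sum>l<n. K $$ (i, l) * Ki $$ (l, j)) + (\<Sum>l<n. K $$ (i, l) * v l) * (v j / s)"
          by (simp only: sum.distrib sum_distrib_right)
        also have "\<dots> = (if i = j then 1 else 0) + kv $ i * (v j / s)"
          by (simp only: Kv[OF ii] inv_entry[OF K Ki KKi ii True])
        finally show ?thesis unfolding entry[OF i j] using ii True by (simp add: f_def g_def)
      next
        case False
        hence jn: "j = n" using j by simp
        have "(\<Sum>l<n. f (i, l) * g (l, j)) = (\<Sum>l<n. K $$ (i, l) * v l) * (- 1 / s)"
          using ii jn by (auto intro!: sum.cong simp: f_def g_def sum_distrib_right sum_negf sum_divide_distrib)
        thus ?thesis unfolding entry[OF i j] using ii jn by (simp add: f_def g_def Kv[OF ii])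
      qed
    next
      case False
      hence in': "i = n" using i by simp
      show ?thesis
      proof (cases "j < n")
        case True
        have "(\<Sum>l<n. f (i, l) * g (l, j)) = (\<Sum>l<n. kv $ l * Ki $$ (l, j) + kv $ l * v l * (v j / s))"
          using in' True by (auto intro!: sum.cong simp: f_def g_def algebra_simps)
        also have "\<dots> = v j + (d - s) * (v j / s)"
        proof -
          have "(\<Sum>l<n. kv $ l * Ki $$ (l, j) + kv $ l * v l * (v j / s)) = (\<Sum>l<n. kv $ l * Ki $$ (l, j)) + (\<Sum>l<n. kv $ l * v l) * (v j / s)"
            by (simp only: sum.distrib sum_distrib_right)
          thus ?thesis by (simp only: kvKi[OF True] sdef) simp
        qed
        finally have e: "(\<Sum>l<n. f (i, l) * g (l, j)) = v j + (d - s) * (v j / s)" .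
        have "v j + (d - s) * (v j / s) + d * (- v j / s) = 0"
          using s0 by (simp add: field_simps)
        thus ?thesis unfolding entry[OF i j] e using in' True by (simp add: f_def g_def)
      next
        case False
        hence jn: "j = n" using j by simp
        have "(\<Sum>l<n. f (i, l) * g (l, j)) = (\<Sum>l<n. kv $ l * v l) * (- 1 / s)"
          using in' jn by (auto intro!: sum.cong simp: f_def g_def sum_distrib_right sum_negf sum_divide_distrib)
        also have "\<dots> = (d - s) * (- 1 / s)" using sdef by simp
        finally have e: "(\<Sum>l<n. f (i, l) * g (l, j)) = (d - s) * (- 1 / s)" .
        have "(d - s) * (- 1 / s) + d * (1 / s) = 1"
          using s0 by (simp add: field_simps)
        thus ?thesis unfolding entry[OF i j] e using in' jn by (simp add: f_def g_def)
      qed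
    qed
  qed (use K in auto)
qed

lemma new_trace:
  fixes Ki W :: "real mat" and wv :: "real vec" and ww s :: real and v :: "nat \<Rightarrow> real"
  assumes Ki: "Ki \<in> carrier_mat n n" and W: "W \<in> carrier_mat n n" and wv: "wv \<in> carrier_vec n"
    and s0: "s \<noteq> 0"
  shows "mtrace (mat (Suc n) (Suc n) (\<lambda>(i, j). if i < n then if j < n then Ki $$ (i, j) + v i * v j / s else - v i / s
        else if j < n then - v j / s else 1 / s) *
      four_block_mat W (mat_of_cols n [wv]) (mat_of_rows n [wv]) (mat 1 1 (\<lambda>_. ww)))
    = mtrace (Ki * W) + ((\<Sum>i<n. \<Sum>l<n. v i * v l * W $$ (l, i)) - 2 * (\<Sum>i<n. wv $ i * v i) + ww) / s"
proof -
  define g where "g = (\<lambda>(i, j). if i < n then if j < n then Ki $$ (i, j) + v i * v j / s else - v i / s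
        else if j < n then - v j / s else 1 / s)"
  define h where "h = (\<lambda>(i, j). if i < n then if j < n then W $$ (i, j) else wv $ i
        else if j < n then wv $ j else ww)"
  have W4: "four_block_mat W (mat_of_cols n [wv]) (mat_of_rows n [wv]) (mat 1 1 (\<lambda>_. ww)) = mat (Suc n) (Suc n) h"
    using W wv by (intro eq_matI) (auto simp: h_def mat_of_cols_index mat_of_rows_index)
  have "mtrace (mat (Suc n) (Suc n) g * mat (Suc n) (Suc n) h)
      = (\<Sum>i<Suc n. \<Sum>l<Suc n. mat (Suc n) (Suc n) g $$ (i, l) * mat (Suc n) (Suc n) h $$ (l, i))"
    by (rule mtrace_mult) auto
  also have "\<dots> = (\<Sum>i<Suc n. \<Sum>l<Suc n. g (i, l) * h (l, i))"
    by (auto intro!: sum.cong)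
  also have "\<dots> = (\<Sum>i<n. (\<Sum>l<n. g (i, l) * h (l, i)) + g (i, n) * h (n, i))
      + ((\<Sum>l<n. g (n, l) * h (l, n)) + g (n, n) * h (n, n))"
    by (simp only: sum.lessThan_Suc)
  also have "\<dots> = (\<Sum>i<n. (\<Sum>l<n. Ki $$ (i, l) * W $$ (l, i) + v i * v l * W $$ (l, i) / s) - wv $ i * v i / s)
      + ((\<Sum>l<n. - (wv $ l * v l / s)) + ww / s)"
    by (auto intro!: sum.cong simp: g_def h_def algebra_simps)
  also have "\<dots> = (\<Sum>i<n. \<Sum>l<n. Ki $$ (i, l) * W $$ (l, i)) + (\<Sum>i<n. \<Sum>l<n. v i * v l * W $$ (l, i)) / s
      - (\<Sum>i<n. wv $ i * v i) / s - (\<Sum>i<n. wv $ i * v i) / s + ww / s"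
    by (simp add: sum.distrib sum_subtractf sum_divide_distrib sum_negf)
  also have "(\<Sum>i<n. \<Sum>l<n. Ki $$ (i, l) * W $$ (l, i)) = mtrace (Ki * W)"
    using mtrace_mult[OF Ki W] by simp
  finally have e: "mtrace (mat (Suc n) (Suc n) g * mat (Suc n) (Suc n) h) = mtrace (Ki * W) + (\<Sum>i<n. \<Sum>l<n. v i * v l * W $$ (l, i)) / s
      - (\<Sum>i<n. wv $ i * v i) / s - (\<Sum>i<n. wv $ i * v i) / s + ww / s" .
  show ?thesis
    unfolding W4 g_def[symmetric] e using s0 by (simp add: field_simps)
qed

theorem proposition1:
  fixes D :: "(real^'d) set" and k :: "real^'d \<Rightarrow> real^'d \<Rightarrow> real"
    and r :: "real^'d \<Rightarrow> real"
    and n :: nat and xb :: "nat \<Rightarrow> real^'d" and a :: "nat \<Rightarrow> nat" and kstar :: nat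
  assumes D_meas: "D \<in> sets lebesgue"
    and k_meas: "(\<lambda>p. k (fst p) (snd p)) \<in> borel_measurable (restrict_space (lebesgue \<Otimes>\<^sub>M lebesgue) (D \<times> D))"
    and k_pd: "pd_kernel D k"
    and w_int: "\<forall>y\<in>D. \<forall>z\<in>D. set_integrable lebesgue D (\<lambda>x. k y x * k z x)"
    and E_int: "set_integrable lebesgue D (\<lambda>x. k x x)"
    and r_nonneg: "\<forall>x\<in>D. 0 \<le> r x"
    and xb_D: "\<forall>i<n. xb i \<in> D"
    and xb_distinct: "inj_on xb {..<n}"
    and a_pos: "\<forall>i<n. 1 \<le> a i"
    and r_sites: "\<forall>i<n. 0 < r (xb i)"
    and K_inv: "invertible_mat (Kmat k r n xb a)"
    and sigma_pos: "\<forall>x\<in>D. 0 < sigma_check k r n xb a x + r x"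
    and kstar_lt: "kstar < n"
    and kstar_argmin: "\<forall>j<n. I_rep D k r n xb a kstar \<le> I_rep D k r n xb a j"
    and den_nz: "B_den k r n xb a kstar \<noteq> 0"
    and trBW_pos: "0 < mtrace (Bmat k r n xb a kstar * Wmat D k n xb)"
    and r_cond: "\<forall>x\<in>D. r x \<ge>
        (kvec k n xb x \<bullet> (minv (Kmat k r n xb a) * Wmat D k n xb * minv (Kmat k r n xb a) *\<^sub>v kvec k n xb x)
         - 2 * (wvec D k n xb x \<bullet> (minv (Kmat k r n xb a) *\<^sub>v kvec k n xb x))
         + wfun D k x x) / mtrace (Bmat k r n xb a kstar * Wmat D k n xb)
        - sigma_check k r n xb a x"
  shows "\<forall>x\<in>D. I_rep D k r n xb a kstar \<le> I_new D k r n xb a x"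
proof -
  define K where "K = Kmat k r n xb a"
  define Ki where "Ki = minv K"
  define W where "W = Wmat D k n xb"
  define p where "p = kstar"
  define T where "T = mtrace (Bmat k r n xb a kstar * Wmat D k n xb)"
  have Kc: "K \<in> carrier_mat n n" unfolding K_def Kmat_def by simp
  have Wc: "W \<in> carrier_mat n n" unfolding W_def Wmat_def by simp
  obtain B where B1: "K * B = 1\<^sub>m (dim_row K)" and B2: "B * K = 1\<^sub>m (dim_row B)"
    using K_inv unfolding K_def[symmetric] invertible_mat_def inverts_mat_def by blast
  have Bc: "B \<in> carrier_mat n n"
  proof -
    have "dim_col B = n" using arg_cong[OF B1, of dim_col] Kc by simp
    moreover have "dim_row B = n" using arg_cong[OF B2, of dim_col] Kc by simp
    ultimately show ?thesis by auto
  qed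
  have KB: "K * B = 1\<^sub>m n" using B1 Kc by simp
  have KiB: "Ki = B" unfolding Ki_def by (rule minv_eq[OF Kc Bc KB])
  have Kic: "Ki \<in> carrier_mat n n" using Bc KiB by simp
  have KKi: "K * Ki = 1\<^sub>m n" using KB KiB by simp
  have KiK: "Ki * K = 1\<^sub>m n" using mat_mult_left_right_inverse[OF Kc Kic KKi] .
  have ksym: "\<forall>x\<in>D. \<forall>y\<in>D. k x y = k y x" using k_pd unfolding pd_kernel_def by blast
  have KT: "transpose_mat K = K"
    using Kc xb_D ksym by (intro eq_matI) (auto simp: K_def Kmat_def)
  have "K * transpose_mat Ki = 1\<^sub>m n"
  proof -
    have "transpose_mat (Ki * K) = transpose_mat K * transpose_mat Ki"
      by (rule transpose_mult[OF Kic Kc])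
    thus ?thesis using KiK KT by simp
  qed
  hence "minv K = transpose_mat Ki" by (intro minv_eq[OF Kc]) (use Kic in auto)
  hence "Ki = transpose_mat Ki" unfolding Ki_def by simp
  hence Kisym: "\<forall>i<n. \<forall>j<n. Ki $$ (i, j) = Ki $$ (j, i)"
    using Kic by (metis carrier_matD index_transpose_mat(1))
  define q where "q = Ki $$ (p, p)"
  define den where "den = B_den k r n xb a kstar"
  define c where "c = r (xb p) / real (a p) - r (xb p) / real (a p + 1)"
  define t where "t = 1 / den"
  have pn: "p < n" using kstar_lt p_def by simp
  have rp: "0 < r (xb p)" using r_sites pn by simp
  have ap: "1 \<le> a p" using a_pos pn by simp
  have den_eq: "den = real (a p) * real (a p + 1) / r (xb p) - q"
    unfolding den_def B_den_def q_def Ki_def K_def p_def by simp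
  have c_eq: "c * (real (a p) * real (a p + 1) / r (xb p)) = 1"
  proof -
    have A: "0 < real (a p)" using ap by simp
    have A1: "0 < real (a p) + 1" using ap by simp
    have "c = r (xb p) / (real (a p) * (real (a p) + 1))"
      unfolding c_def using A A1 by (simp add: field_simps)
    thus ?thesis using A A1 rp by simp
  qed
  have den0: "den \<noteq> 0" using den_nz den_def by simp
  have ct: "t - c - c * t * Ki $$ (p, p) = 0"
  proof -
    have "t - c - c * t * Ki $$ (p, p) = t * (1 - c * (den + q))"
      unfolding t_def q_def using den0 by (simp add: field_simps)
    also have "den + q = real (a p) * real (a p + 1) / r (xb p)" using den_eq by simp
    also have "t * (1 - c * (real (a p) * real (a p + 1) / r (xb p))) = 0" by (simp only: c_eq) simp
    finally show ?thesis .
  qed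
  have K'eq: "Kmat k r n xb (a(kstar := a kstar + 1)) = mat n n (\<lambda>(i, j). K $$ (i, j) - (if i = p \<and> j = p then c else 0))"
    by (intro eq_matI) (auto simp: K_def Kmat_def c_def p_def)
  define M where "M = mat n n (\<lambda>(i, j). Ki $$ (i, j) + t * (Ki $$ (i, p) * Ki $$ (p, j)))"
  have Mc: "M \<in> carrier_mat n n" unfolding M_def by simp
  have K'M: "Kmat k r n xb (a(kstar := a kstar + 1)) * M = 1\<^sub>m n"
    unfolding K'eq M_def by (rule rep_inverse[OF Kc Kic KKi pn ct])
  have minvK': "minv (Kmat k r n xb (a(kstar := a kstar + 1))) = M"
    by (rule minv_eq[OF _ Mc K'M]) (simp add: Kmat_def)
  have Bm: "Bmat k r n xb a kstar = mat n n (\<lambda>(i, j). t * (Ki $$ (i, p) * Ki $$ (p, j)))"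
    by (intro eq_matI) (auto simp: Bmat_def t_def den_def Ki_def K_def p_def)
  have trM: "mtrace (M * W) = mtrace (Ki * W) + T"
  proof -
    have "mtrace (M * W) = (\<Sum>i<n. \<Sum>l<n. M $$ (i, l) * W $$ (l, i))" by (rule mtrace_mult[OF Mc Wc])
    also have "\<dots> = (\<Sum>i<n. \<Sum>l<n. Ki $$ (i, l) * W $$ (l, i) + t * (Ki $$ (i, p) * Ki $$ (p, l)) * W $$ (l, i))"
      by (auto intro!: sum.cong simp: M_def algebra_simps)
    also have "\<dots> = (\<Sum>i<n. \<Sum>l<n. Ki $$ (i, l) * W $$ (l, i)) + (\<Sum>i<n. \<Sum>l<n. t * (Ki $$ (i, p) * Ki $$ (p, l)) * W $$ (l, i))"
      by (simp add: sum.distrib)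
    also have "(\<Sum>i<n. \<Sum>l<n. Ki $$ (i, l) * W $$ (l, i)) = mtrace (Ki * W)"
      using mtrace_mult[OF Kic Wc] by simp
    also have "(\<Sum>i<n. \<Sum>l<n. t * (Ki $$ (i, p) * Ki $$ (p, l)) * W $$ (l, i)) = T"
    proof -
      have "T = mtrace (Bmat k r n xb a kstar * W)" unfolding T_def W_def by simp
      also have "\<dots> = (\<Sum>i<n. \<Sum>l<n. Bmat k r n xb a kstar $$ (i, l) * W $$ (l, i))"
        by (rule mtrace_mult[OF _ Wc]) (simp add: Bm)
      also have "\<dots> = (\<Sum>i<n. \<Sum>l<n. t * (Ki $$ (i, p) * Ki $$ (p, l)) * W $$ (l, i))"
        by (auto intro!: sum.cong simp: Bm)
      finally show ?thesis by simp
    qed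
    finally show ?thesis .
  qed
  have rep: "I_rep D k r n xb a kstar = Eint D k - mtrace (Ki * W) - T"
    unfolding I_rep_def minvK'[unfolded p_def] W_def[symmetric] trM by simp
  have Tpos: "0 < T" using trBW_pos T_def by simp
  show ?thesis
  proof
    fix x assume xD: "x \<in> D"
    define kv where "kv = kvec k n xb x"
    define wv where "wv = wvec D k n xb x"
    define v where "v = (\<lambda>i. \<Sum>l<n. Ki $$ (i, l) * kv $ l)"
    define d where "d = k x x + r x"
    define s where "s = d - (\<Sum>l<n. kv $ l * v l)"
    define Q where "Q = (\<Sum>i<n. \<Sum>l<n. v i * v l * W $$ (l, i)) - 2 * (\<Sum>i<n. wv $ i * v i) + wfun D k x x"
    have kvc: "kv \<in> carrier_vec n" unfolding kv_def kvec_def by simp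
    have wvc: "wv \<in> carrier_vec n" unfolding wv_def wvec_def by simp
    have Kiv: "Ki *\<^sub>v kv = vec n v"
      using Kic kvc by (intro eq_vecI) (auto simp: v_def scalar_prod_def lessThan_atLeast0 intro!: sum.cong)
    have sig: "sigma_check k r n xb a x = k x x - (\<Sum>l<n. kv $ l * v l)"
      unfolding sigma_check_def kv_def[symmetric] K_def[symmetric] Ki_def[symmetric] Kiv
      by (simp add: scalar_prod_def lessThan_atLeast0)
    have s_eq: "s = sigma_check k r n xb a x + r x" unfolding s_def d_def sig by simp
    have spos: "0 < s" using sigma_pos xD s_eq by simp
    have newinv: "minv (K_new k r n xb a x) = mat (Suc n) (Suc n) (\<lambda>(i, j). if i < n then if j < n then Ki $$ (i, j) + v i * v j / s else - v i / s
        else if j < n then - v j / s else 1 / s)"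
      unfolding K_new_def kv_def[symmetric] K_def[symmetric]
    proof (rule minv_eq[of _ "Suc n"])
      show "four_block_mat K (mat_of_cols n [kv]) (mat_of_rows n [kv]) (mat 1 1 (\<lambda>_. k x x + r x)) \<in> carrier_mat (Suc n) (Suc n)"
        using four_block_carrier_mat[OF Kc, of "mat 1 1 (\<lambda>_. k x x + r x)" 1 1] by simp
    qed (simp, use new_inverse[OF Kc Kic KKi Kisym kvc v_def s_def[unfolded d_def]] spos in simp)
    have new: "I_new D k r n xb a x = Eint D k - (mtrace (Ki * W) + Q / s)"
      unfolding I_new_def newinv W_new_def wv_def[symmetric] W_def[symmetric] Q_def
      using new_trace[OF Kic Wc wvc, of s v "wfun D k x x"] spos by simp
    have Wsym: "\<forall>i<n. \<forall>l<n. W $$ (i, l) = W $$ (l, i)"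
      unfolding W_def Wmat_def wfun_def by (auto simp: mult.commute)
    have kvKi: "(\<Sum>i<n. kv $ i * Ki $$ (i, m)) = v m" if "m < n" for m
      unfolding v_def using Kisym that by (auto intro!: sum.cong simp: mult.commute)
    have Wv: "W *\<^sub>v vec n v = vec n (\<lambda>m. \<Sum>l<n. W $$ (m, l) * v l)"
      using Wc by (intro eq_vecI) (auto simp: scalar_prod_def lessThan_atLeast0 intro!: sum.cong)
    have Q1: "kv \<bullet> (Ki * W * Ki *\<^sub>v kv) = (\<Sum>i<n. \<Sum>l<n. v i * v l * W $$ (l, i))"
    proof -
      define u where "u = (\<lambda>m. \<Sum>l<n. W $$ (m, l) * v l)"
      have "Ki * W * Ki *\<^sub>v kv = Ki *\<^sub>v (W *\<^sub>v (Ki *\<^sub>v kv))"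
        using Kic Wc kvc by (simp add: assoc_mult_mat_vec[of _ n n _ n])
      also have "\<dots> = Ki *\<^sub>v vec n u" unfolding Kiv Wv u_def by simp
      also have "\<dots> = vec n (\<lambda>i. \<Sum>m<n. Ki $$ (i, m) * u m)"
        using Kic by (intro eq_vecI) (auto simp: scalar_prod_def lessThan_atLeast0 intro!: sum.cong)
      finally have "kv \<bullet> (Ki * W * Ki *\<^sub>v kv) = (\<Sum>i<n. kv $ i * (\<Sum>m<n. Ki $$ (i, m) * u m))"
        by (simp add: scalar_prod_def lessThan_atLeast0)
      also have "\<dots> = (\<Sum>i<n. \<Sum>m<n. kv $ i * Ki $$ (i, m) * u m)"
        by (simp add: sum_distrib_left mult.assoc)
      also have "\<dots> = (\<Sum>m<n. \<Sum>i<n. kv $ i * Ki $$ (i, m) * u m)"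
        by (rule sum.swap)
      also have "\<dots> = (\<Sum>m<n. v m * u m)"
        by (rule sum.cong) (auto simp: sum_distrib_right[symmetric] kvKi)
      also have "\<dots> = (\<Sum>m<n. \<Sum>l<n. v m * v l * W $$ (l, m))"
        using Wsym by (auto intro!: sum.cong simp: u_def sum_distrib_left algebra_simps)
      finally show ?thesis .
    qed
    have Q2: "wv \<bullet> (Ki *\<^sub>v kv) = (\<Sum>i<n. wv $ i * v i)"
      unfolding Kiv by (simp add: scalar_prod_def lessThan_atLeast0)
    have cond: "r x \<ge> Q / T - sigma_check k r n xb a x"
    proof -
      have h: "r x \<ge>
        (kvec k n xb x \<bullet> (minv (Kmat k r n xb a) * Wmat D k n xb * minv (Kmat k r n xb a) *\<^sub>v kvec k n xb x)
         - 2 * (wvec D k n xb x \<bullet> (minv (Kmat k r n xb a) *\<^sub>v kvec k n xb x))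
         + wfun D k x x) / mtrace (Bmat k r n xb a kstar * Wmat D k n xb)
        - sigma_check k r n xb a x" using r_cond xD by blast
      show ?thesis using h unfolding T_def[symmetric] unfolding Q_def kv_def[symmetric] wv_def[symmetric]
        K_def[symmetric] Ki_def[symmetric] W_def[symmetric] Q1 Q2 .
    qed
    hence "Q / T \<le> s" using s_eq by simp
    hence "Q \<le> s * T" using Tpos by (simp add: divide_le_eq)
    hence "Q / s \<le> T" using spos by (simp add: divide_le_eq mult.commute)
    thus "I_rep D k r n xb a kstar \<le> I_new D k r n xb a x" unfolding rep new by simp
  qed
qed

end
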